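(* Let $\lambda$ be a nonzero real number. For every integer $n\ge0$ and every real $x$ with $1+\lambda x>0$, \[ \mathrm{Bel}_{n+1,\lambda}(x)=\frac{x}{1+\lambda x}\Big(\mathrm{Bel}_{n,\lambda}'(x)+\mathrm{Bel}_{n,\lambda}(x)+\lambda x\,\mathrm{Bel}_{n,\lambda}'(x)\Big), \] where $\mathrm{Bel}_{n,\lambda}'(x)=\frac{d}{dx}\mathrm{Bel}_{n,\lambda}(x)$.
   Context: For nonzero real $\lambda$, $e_\lambda(x)=(1+\lambda x)^{1/\lambda}$ and $e_\lambda^{-1}(x)=(1+\lambda x)^{-1/\lambda}$. The new type degenerate Bell polynomials $\mathrm{Bel}_{n,\lambda}(x)$ are defined by $e_{\lambda}(xe^{t})\,e_{\lambda}^{-1}(x)=\big(\frac{1+\lambda xe^t}{1+\lambda x}\big)^{1/\lambda}=\sum_{n=0}^{\infty}\mathrm{Bel}_{n,\lambda}(x)\frac{t^{n}}{n!}$ (expansion in powers of $t$). *)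

theory Defs
  imports "HOL-Analysis.Analysis"
begin

text \<open>Generating function of the new type degenerate Bell polynomials:
  e_lambda(x e^t) e_lambda^{-1}(x) = ((1 + lambda x e^t)/(1 + lambda x))^(1/lambda).\<close>
definition degBel_gf :: "real \<Rightarrow> real \<Rightarrow> real \<Rightarrow> real" where
  "degBel_gf lam x t = ((1 + lam * x * exp t) / (1 + lam * x)) powr (1 / lam)"

text \<open>Bel_{n,lambda}(x) is n! times the n-th Taylor coefficient in t at t = 0,
  i.e. the n-th derivative in t at t = 0.\<close>
definition degBel :: "nat \<Rightarrow> real \<Rightarrow> real \<Rightarrow> real" where
  "degBel n lam x = (deriv ^^ n) (degBel_gf lam x) 0"

end

theory Submission
  imports Defs "HOL-Computational_Algebra.Polynomial"
begin

fun PP :: "real \<Rightarrow> nat \<Rightarrow> real poly" where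
  "PP lam 0 = 1"
| "PP lam (Suc n) = [:0,1:] * (pderiv (PP lam n) * [:1,lam:] + smult (1 - real n * lam) (PP lam n))"

lemma gf_deriv:
  assumes "lam \<noteq> 0" "1 + lam * x > 0" "1 + lam * x * exp t > 0"
  shows "(degBel_gf lam x has_real_derivative
           degBel_gf lam x t * (x * exp t / (1 + lam * x * exp t))) (at t)"
proof -
  let ?E = "\<lambda>t. exp ((ln (1 + lam * x * exp t) - ln (1 + lam * x)) / lam)"
  have eq: "degBel_gf lam x s = ?E s" if "1 + lam * x * exp s > 0" for s
    using that assms by (simp add: degBel_gf_def powr_def ln_div)
  have "(?E has_real_derivative ?E t * (x * exp t / (1 + lam * x * exp t))) (at t)"
  proof -
    have t': "0 < 1 + lam * (x * exp t)" using assms by (simp add: mult.assoc)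
    show ?thesis
      apply (rule DERIV_cong)
      using assms(1) t' apply (auto intro!: derivative_eq_intros)[1]
      using assms(1) t' by (simp add: mult.assoc)
  qed
  moreover have "open {s. 1 + lam * x * exp s > (0::real)}"
    by (intro open_Collect_less continuous_intros)
  ultimately have "(degBel_gf lam x has_real_derivative ?E t * (x * exp t / (1 + lam * x * exp t))) (at t)"
    apply (rule has_field_derivative_transform_within_open)
    using assms(3) apply simp
    using eq by simp
  then show ?thesis using eq[OF assms(3)] by simp
qed

lemma iter_formula:
  assumes "lam \<noteq> 0" "1 + lam * x > 0"
  shows "\<forall>t. 1 + lam * x * exp t > 0 \<longrightarrow>
    (deriv ^^ n) (degBel_gf lam x) t =
      degBel_gf lam x t * poly (PP lam n) (x * exp t) / (1 + lam * x * exp t) ^ n"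
proof (induction n)
  case 0
  then show ?case by simp
next
  case (Suc n)
  show ?case
  proof (intro allI impI)
    fix t assume t: "1 + lam * x * exp t > 0"
    let ?S = "{s. 1 + lam * x * exp s > (0::real)}"
    have op: "open ?S" by (intro open_Collect_less continuous_intros)
    let ?G = "\<lambda>t. degBel_gf lam x t * poly (PP lam n) (x * exp t) / (1 + lam * x * exp t) ^ n"
    have D: "(?G has_real_derivative
       degBel_gf lam x t * poly (PP lam (Suc n)) (x * exp t) / (1 + lam * x * exp t) ^ Suc n) (at t)"
    proof -
      define F where "F = degBel_gf lam x t"
      define z where "z = x * exp t"
      define A where "A = 1 + lam * x * exp t"
      define p where "p = poly (PP lam n) z"
      define dp where "dp = poly (pderiv (PP lam n)) z"
      have d1: "(degBel_gf lam x has_real_derivative F * (z / A)) (at t)"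
        unfolding F_def z_def A_def by (rule gf_deriv[OF assms t])
      have dz: "((\<lambda>s. x * exp s) has_real_derivative z) (at t)"
        unfolding z_def by (auto intro!: derivative_eq_intros)
      have d2: "((\<lambda>s. poly (PP lam n) (x * exp s)) has_real_derivative dp * z) (at t)"
        unfolding dp_def using DERIV_chain2[OF poly_DERIV[of "PP lam n"] dz] by (simp add: z_def)
      have dA: "((\<lambda>s. 1 + lam * x * exp s) has_real_derivative lam * z) (at t)"
        unfolding z_def by (auto intro!: derivative_eq_intros)
      have d3: "((\<lambda>s. (1 + lam * x * exp s) ^ n) has_real_derivative real n * (lam * z * A ^ (n - Suc 0))) (at t)"
        using DERIV_power[OF dA, of n] unfolding A_def by simp
      have d4: "(?G has_real_derivative
         ((F * (z / A) * p + dp * z * F) * A ^ n - F * p * (real n * (lam * z * A ^ (n - Suc 0)))) / (A ^ n * A ^ n)) (at t)"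
        using DERIV_divide[OF DERIV_mult[OF d1 d2] d3] t unfolding F_def p_def z_def A_def by simp
      have Apos: "A > 0" using t A_def by simp
      have eqn: "((F * (z / A) * p + dp * z * F) * A ^ n - F * p * (real n * (lam * z * A ^ (n - Suc 0)))) / (A ^ n * A ^ n)
          = F * (z * (dp * (1 + lam * z) + (1 - real n * lam) * p)) / A ^ Suc n"
      proof (cases n)
        case 0
        have A1: "1 + lam * z = A" unfolding A_def z_def by simp
        then show ?thesis using Apos unfolding 0 A1 by (simp add: field_simps)
      next
        case (Suc m)
        have A1: "1 + lam * z = A" unfolding A_def z_def by simp
        show ?thesis using Apos unfolding Suc A1 by (simp add: field_simps)
      qed
      have pe: "poly (PP lam (Suc n)) z = z * (dp * (1 + lam * z) + (1 - real n * lam) * p)"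
        by (simp add: dp_def p_def algebra_simps)
      show ?thesis
        apply (rule DERIV_cong[OF d4])
        unfolding eqn F_def[symmetric] A_def[symmetric] z_def[symmetric] pe by simp
    qed
    have "(deriv ^^ Suc n) (degBel_gf lam x) t = deriv ((deriv ^^ n) (degBel_gf lam x)) t" by simp
    also have "\<dots> = degBel_gf lam x t * poly (PP lam (Suc n)) (x * exp t) / (1 + lam * x * exp t) ^ Suc n"
      apply (rule DERIV_imp_deriv)
      apply (rule has_field_derivative_transform_within_open[OF D op])
      using t Suc by auto
    finally show "(deriv ^^ Suc n) (degBel_gf lam x) t = degBel_gf lam x t * poly (PP lam (Suc n)) (x * exp t) / (1 + lam * x * exp t) ^ Suc n" .
  qed
qed

lemma degBel_poly:
  assumes "lam \<noteq> 0" "1 + lam * y > 0"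
  shows "degBel n lam y = poly (PP lam n) y / (1 + lam * y) ^ n"
proof -
  have "degBel_gf lam y 0 = 1" using assms by (simp add: degBel_gf_def)
  then show ?thesis using iter_formula[OF assms, of n] assms by (simp add: degBel_def)
qed

theorem theorem9:
  fixes lam x :: real and n :: nat
  assumes "lam \<noteq> 0" and "1 + lam * x > 0"
  shows "degBel (Suc n) lam x =
    x / (1 + lam * x) * (deriv (\<lambda>y. degBel n lam y) x + degBel n lam x
                          + lam * x * deriv (\<lambda>y. degBel n lam y) x)"
proof -
  define A where "A = 1 + lam * x"
  define p where "p = poly (PP lam n) x"
  define dp where "dp = poly (pderiv (PP lam n)) x"
  have Apos: "A > 0" using assms A_def by simp
  have op: "open {y. 1 + lam * y > (0::real)}" by (intro open_Collect_less continuous_intros)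
  have dA: "((\<lambda>y. 1 + lam * y) has_real_derivative lam) (at x)"
    by (auto intro!: derivative_eq_intros)
  have d3: "((\<lambda>y. (1 + lam * y) ^ n) has_real_derivative real n * (lam * A ^ (n - Suc 0))) (at x)"
    using DERIV_power[OF dA, of n] unfolding A_def by simp
  have dR: "((\<lambda>y. poly (PP lam n) y / (1 + lam * y) ^ n) has_real_derivative
      (dp * A ^ n - p * (real n * (lam * A ^ (n - Suc 0)))) / (A ^ n * A ^ n)) (at x)"
    using DERIV_divide[OF poly_DERIV[of "PP lam n" x] d3] Apos unfolding dp_def p_def A_def by simp
  have "((\<lambda>y. degBel n lam y) has_real_derivative
      (dp * A ^ n - p * (real n * (lam * A ^ (n - Suc 0)))) / (A ^ n * A ^ n)) (at x)"
    apply (rule has_field_derivative_transform_within_open[OF dR op])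
    using assms apply simp
    using degBel_poly[OF assms(1)] by simp
  then have dd: "deriv (\<lambda>y. degBel n lam y) x = (dp * A ^ n - p * (real n * (lam * A ^ (n - Suc 0)))) / (A ^ n * A ^ n)"
    by (rule DERIV_imp_deriv)
  have b0: "degBel n lam x = p / A ^ n" using degBel_poly[OF assms] unfolding p_def A_def .
  have b1: "degBel (Suc n) lam x = x * (dp * A + (1 - real n * lam) * p) / A ^ Suc n"
    using degBel_poly[OF assms, of "Suc n"] unfolding p_def A_def dp_def by (simp add: algebra_simps)
  have xA: "1 + lam * x = A" using A_def by simp
  define D where "D = (dp * A ^ n - p * (real n * (lam * A ^ (n - Suc 0)))) / (A ^ n * A ^ n)"
  have e1: "D + p / A ^ n + lam * x * D = A * D + p / A ^ n" by (simp add: A_def algebra_simps)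
  have e2: "A * D = (dp * A - p * real n * lam) / A ^ n"
  proof (cases n)
    case 0
    then show ?thesis using Apos by (simp add: D_def field_simps)
  next
    case (Suc m)
    have "A * D = A * (A ^ m * (dp * A - p * real n * lam)) / (A ^ n * A ^ n)"
      unfolding D_def Suc by (simp add: algebra_simps)
    also have "\<dots> = (dp * A - p * real n * lam) / A ^ n"
      unfolding Suc using Apos by (simp add: field_simps)
    finally show ?thesis .
  qed
  have "degBel (Suc n) lam x = x / A * (A * D + p / A ^ n)"
    unfolding b1 e2 using Apos by (simp add: field_simps)
  then show ?thesis
    unfolding dd b0 xA D_def[symmetric] e1 .
qed

end
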